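(* Let $V$ be a real vector space and $C$ a convex cone in $V$ with $0\in C$. Suppose $X$ and $Y$ are disjoint $C$-antichain-convex subsets of $V$. (1) If $X$ is $C$-upward, then $\operatorname{co}(X)\cap\operatorname{co}(Y)=\emptyset$. (2) If $X$ is $C$-downward, then $\operatorname{co}(X)\cap\operatorname{co}(Y)=\emptyset$.
   Context: A cone in $V$ is a subset $C$ with $\lambda C\subseteq C$ for all $\lambda>0$. $S\subseteq V$ is $C$-antichain-convex iff for all $x,y\in S$ and $\lambda\in[0,1]$ with $y-x\notin C\cup(-C)$ one has $\lambda x+(1-\lambda)y\in S$. $S$ is $C$-upward iff $S+C\subseteq S$; $C$-downward iff $S-C\subseteq S$. $\operatorname{co}$ denotes convex hull. *)

theory Defs
  imports "HOL-Analysis.Analysis"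
begin

definition pos_cone :: "'a::real_vector set \<Rightarrow> bool" where
  "pos_cone C \<longleftrightarrow> (\<forall>t::real. t > 0 \<longrightarrow> (\<lambda>c. t *\<^sub>R c) ` C \<subseteq> C)"

definition antichain_convex :: "'a::real_vector set \<Rightarrow> 'a set \<Rightarrow> bool" where
  "antichain_convex C S \<longleftrightarrow>
     (\<forall>x\<in>S. \<forall>y\<in>S. \<forall>t::real. 0 \<le> t \<and> t \<le> 1 \<and> y - x \<notin> C \<union> uminus ` C
        \<longrightarrow> t *\<^sub>R x + (1 - t) *\<^sub>R y \<in> S)"

definition upward :: "'a::real_vector set \<Rightarrow> 'a set \<Rightarrow> bool" where
  "upward C S \<longleftrightarrow> (\<Union>s\<in>S. \<Union>c\<in>C. {s + c}) \<subseteq> S"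

definition downward :: "'a::real_vector set \<Rightarrow> 'a set \<Rightarrow> bool" where
  "downward C S \<longleftrightarrow> (\<Union>s\<in>S. \<Union>c\<in>C. {s - c}) \<subseteq> S"

end

theory Submission
  imports Defs
begin

lemma cone_scale:
  assumes "pos_cone C" "0 \<in> C" "c \<in> C" "(t::real) \<ge> 0"
  shows "t *\<^sub>R c \<in> C"
proof (cases "t = 0")
  case True then show ?thesis using assms by simp
next
  case False then have "t > 0" using assms by simp
  then show ?thesis using assms unfolding pos_cone_def by blast
qed

lemma cone_add:
  assumes "pos_cone C" "convex C" "0 \<in> C" "a \<in> C" "b \<in> C"
  shows "a + b \<in> C"
proof -
  have "(1/2::real) *\<^sub>R a + (1/2::real) *\<^sub>R b \<in> C"
    using assms(2,4,5) unfolding convex_def by auto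
  then have "(2::real) *\<^sub>R ((1/2::real) *\<^sub>R a + (1/2::real) *\<^sub>R b) \<in> C"
    using cone_scale[OF assms(1,3)] by auto
  then show ?thesis by (simp add: scaleR_add_right)
qed

lemma up_convex:
  assumes "pos_cone C" "0 \<in> C" "antichain_convex C X" "upward C X"
  shows "convex X"
  unfolding convex_def
proof (intro ballI allI impI)
  fix x y and u v :: real
  assume x: "x \<in> X" and y: "y \<in> X" and u: "0 \<le> u" and v: "0 \<le> v" and uv: "u + v = 1"
  have up: "s + c \<in> X" if "s \<in> X" "c \<in> C" for s c
    using assms(4) that unfolding upward_def by blast
  have ee: "u *\<^sub>R x + v *\<^sub>R y = u *\<^sub>R x + (1 - u) *\<^sub>R y" using uv by simp
  show "u *\<^sub>R x + v *\<^sub>R y \<in> X"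
  proof (cases "y - x \<in> C")
    case True
    have u1: "u = 1 - v" using uv by simp
    have "u *\<^sub>R x + v *\<^sub>R y = x + v *\<^sub>R (y - x)" unfolding u1
      by (simp add: algebra_simps)
    then show ?thesis using up[OF x cone_scale[OF assms(1,2) True v]] by simp
  next
    case F1: False
    show ?thesis
    proof (cases "y - x \<in> uminus ` C")
      case True
      obtain e where e: "e \<in> C" "y - x = - e" using True by blast
      have "x - y = e" using e(2) by (metis minus_diff_eq minus_minus)
      then have xy: "x - y \<in> C" using e(1) by simp
      have v1: "v = 1 - u" using uv by simp
      have "u *\<^sub>R x + v *\<^sub>R y = y + u *\<^sub>R (x - y)" unfolding v1
        by (simp add: algebra_simps)
      then show ?thesis using up[OF y cone_scale[OF assms(1,2) xy u]] by simp
    next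
      case False
      have nn: "y - x \<notin> C \<union> uminus ` C" using F1 False by blast
      have "u *\<^sub>R x + (1 - u) *\<^sub>R y \<in> X"
        using nn assms(3) x y u v uv unfolding antichain_convex_def by simp
      then show ?thesis using ee by (simp only:)
    qed
  qed
qed

lemma memZ: "y \<in> Y \<Longrightarrow> c \<in> C \<Longrightarrow> z = y - c \<Longrightarrow> z \<in> {y - c | y c. y \<in> Y \<and> c \<in> C}"
  by blast

lemma minus_convex:
  assumes "pos_cone C" "convex C" "0 \<in> C" "antichain_convex C Y"
  shows "convex {y - c | y c. y \<in> Y \<and> c \<in> C}"
  unfolding convex_def
proof (intro ballI allI impI)
  fix a b and u v :: real
  assume a: "a \<in> {y - c | y c. y \<in> Y \<and> c \<in> C}" and b: "b \<in> {y - c | y c. y \<in> Y \<and> c \<in> C}"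
    and u: "0 \<le> u" and v: "0 \<le> v" and uv: "u + v = 1"
  have v1: "v = 1 - u" using uv by simp
  obtain y1 c1 where 1: "a = y1 - c1" "y1 \<in> Y" "c1 \<in> C" using a by blast
  obtain y2 c2 where 2: "b = y2 - c2" "y2 \<in> Y" "c2 \<in> C" using b by blast
  have cc: "u *\<^sub>R p + v *\<^sub>R q \<in> C" if "p \<in> C" "q \<in> C" for p q
    using assms(2) that u v uv unfolding convex_def by blast
  have eq: "u *\<^sub>R a + v *\<^sub>R b = (u *\<^sub>R y1 + v *\<^sub>R y2) - (u *\<^sub>R c1 + v *\<^sub>R c2)"
    unfolding 1 2 by (simp add: algebra_simps)
  show "u *\<^sub>R a + v *\<^sub>R b \<in> {y - c | y c. y \<in> Y \<and> c \<in> C}"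
  proof (cases "y2 - y1 \<in> C")
    case True
    define d where "d = y2 - y1"
    have E: "u *\<^sub>R a + v *\<^sub>R b = y2 - (u *\<^sub>R (d + c1) + v *\<^sub>R c2)"
    proof -
      have h: "u *\<^sub>R y1 + v *\<^sub>R y2 = y2 - u *\<^sub>R d" unfolding d_def v1
        by (simp add: algebra_simps)
      show ?thesis unfolding eq h by (simp add: algebra_simps)
    qed
    have "d + c1 \<in> C" using cone_add[OF assms(1-3)] True 1(3) unfolding d_def by blast
    then have XC: "u *\<^sub>R (d + c1) + v *\<^sub>R c2 \<in> C"
      using cc 2(3) by blast
    show ?thesis using memZ[OF 2(2) XC E] .
  next
    case F1: False
    show ?thesis
    proof (cases "y2 - y1 \<in> uminus ` C")
      case True
      define d where "d = y1 - y2"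
      obtain e where e: "e \<in> C" "y2 - y1 = - e" using True by blast
      have "d = e" unfolding d_def using e(2) by (metis minus_diff_eq minus_minus)
      then have dC: "d \<in> C" using e(1) by simp
      have E: "u *\<^sub>R a + v *\<^sub>R b = y1 - (u *\<^sub>R c1 + v *\<^sub>R (d + c2))"
      proof -
        have h: "u *\<^sub>R y1 + v *\<^sub>R y2 = y1 - v *\<^sub>R d" unfolding d_def v1
          by (simp add: algebra_simps)
        show ?thesis unfolding eq h by (simp add: algebra_simps)
      qed
      have "d + c2 \<in> C" using cone_add[OF assms(1-3)] dC 2(3) by blast
      then have XC: "u *\<^sub>R c1 + v *\<^sub>R (d + c2) \<in> C"
        using cc 1(3) by blast
      show ?thesis using memZ[OF 1(2) XC E] .
    next
      case False
      have nn: "y2 - y1 \<notin> C \<union> uminus ` C" using F1 False by blast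
      have "u *\<^sub>R y1 + (1 - u) *\<^sub>R y2 \<in> Y"
        using assms(4) 1(2) 2(2) u v uv nn unfolding antichain_convex_def v1
        by simp
      then have YY: "u *\<^sub>R y1 + v *\<^sub>R y2 \<in> Y" unfolding v1 .
      have XC: "u *\<^sub>R c1 + v *\<^sub>R c2 \<in> C" using cc 1(3) 2(3) by blast
      show ?thesis using memZ[OF YY XC eq] .
    qed
  qed
qed

lemma part_up:
  fixes C X Y :: "'a::real_vector set"
  assumes "pos_cone C" and "convex C" and "0 \<in> C"
    and "X \<inter> Y = {}"
    and "antichain_convex C X" and "antichain_convex C Y" and "upward C X"
  shows "convex hull X \<inter> convex hull Y = {}"
proof -
  have hx: "convex hull X = X" using up_convex[OF assms(1,3,5,7)] by (simp add: convex_hull_eq)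
  let ?Z = "{y - c | y c. y \<in> Y \<and> c \<in> C}"
  have "Y \<subseteq> ?Z" using assms(3) by force
  then have hy: "convex hull Y \<subseteq> ?Z"
    using minus_convex[OF assms(1-3,6)] by (simp add: hull_minimal)
  have "X \<inter> ?Z = {}"
  proof (rule ccontr)
    assume "X \<inter> ?Z \<noteq> {}"
    then obtain y c where "y - c \<in> X" "y \<in> Y" "c \<in> C" by blast
    then have "(y - c) + c \<in> X" using assms(7) unfolding upward_def by blast
    then show False using \<open>y \<in> Y\<close> assms(4) by auto
  qed
  then show ?thesis using hx hy by blast
qed

lemma neg_cone:
  assumes "pos_cone C" "convex C" "0 \<in> C"
  shows "pos_cone (uminus ` C)" "convex (uminus ` C)" "0 \<in> uminus ` C"
proof -
  show "pos_cone (uminus ` C)" using assms(1) unfolding pos_cone_def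
    by (auto simp: image_iff) (metis scaleR_minus_right subsetD image_eqI)
  show "convex (uminus ` C)" using assms(2) by (simp add: convex_negations)
  show "0 \<in> uminus ` C" using assms(3) by force
qed

lemma ac_neg: "antichain_convex (uminus ` C) S = antichain_convex C S"
proof -
  have "uminus ` C \<union> uminus ` uminus ` C = C \<union> uminus ` C"
    by (auto simp: image_image)
  then show ?thesis unfolding antichain_convex_def by simp
qed

lemma down_up: "downward C X = upward (uminus ` C) X"
  unfolding upward_def downward_def by auto

theorem lemma7:
  fixes C X Y :: "'a::real_vector set"
  assumes "pos_cone C" and "convex C" and "0 \<in> C"
    and "X \<inter> Y = {}"
    and "antichain_convex C X" and "antichain_convex C Y"
  shows "(upward C X \<longrightarrow> convex hull X \<inter> convex hull Y = {})
       \<and> (downward C X \<longrightarrow> convex hull X \<inter> convex hull Y = {})"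
proof -
  have a: "antichain_convex (uminus ` C) X" "antichain_convex (uminus ` C) Y"
    using ac_neg assms(5,6) by auto
  have p1: "upward C X \<Longrightarrow> convex hull X \<inter> convex hull Y = {}"
    by (rule part_up[OF assms])
  have p2: "downward C X \<Longrightarrow> convex hull X \<inter> convex hull Y = {}"
    unfolding down_up by (rule part_up[OF neg_cone[OF assms(1-3)] assms(4) a])
  show ?thesis using p1 p2 by simp
qed

end
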